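(* Let $G$ be a maximal $1$-plane graph with at least $4$ vertices in which every edge lies in some $K_4$-subgraph, and let $\{G_i\}_{i\in\{0,\dots,N\}}$ be a $K_4$-extension sequence of $G$ determined by the SWM*-rule, with $G_i=G[V(G_{i-1})\cup V(F_i)]$. For any $i\in\{1,\dots,N\}$, if $F_i$ is a simple micro $K_4$-link from $G_{i-1}$, then $i<N$ and $G_{i+1}$ is a strong or weak $K_4$-extension of $G_i$.
   Context: A $1$-plane graph is a simple graph drawn in the plane (vertices distinct points, edges arcs joining their ends, no edge crossing itself, two edges crossing at most once, adjacent edges not crossing) so that every edge is crossed at most once; it is maximal if no edge joining two non-adjacent vertices can be added so that the result is still a simple $1$-plane graph. An edge is clean if it crosses no other edge. If edge $ux$ crosses another edge at point $\alpha$, the arc $u\alpha$ is the near half-edge of $ux$ incident with $u$. Two edge segments are consecutive on the boundary of a face if they are consecutive on one of the closed walks forming that boundary. $G[A]$ is the subgraph induced by $A$. For a vertex-induced subgraph $G'$ and a $K_4$-subgraph $F$ of $G$ with $1\le|V(F)\cap V(G')|\le 3$, $F$ is a strong/weak/micro $K_4$-link from $G'$ when $|V(F)\cap V(G')|=3/2/1$, and $G[V(G')\cup V(F)]$ is the corresponding $K_4$-extension of $G'$. SWM*-rule for a proper vertex-induced subgraph $G'$: choose any strong $K_4$-link from $G'$ if one exists; otherwise any weak one if one exists; otherwise choose $u\in V(G')$ with $N_G(u)\not\subseteq V(G')$, then $x\in N_G(u)\setminus V(G')$ such that for some $w\in N_G(u)\cap V(G')$ the edge $ux$ (or its near half-edge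 at $u$) and $uw$ (or its near half-edge at $u$) are consecutive on the boundary of some face of $G$; if $ux$ is clean choose any $K_4$-subgraph containing $ux$, and if $ux$ crosses edge $st$ choose $G[\{u,x,s,t\}]$. A $K_4$-extension sequence determined by the SWM*-rule is $G_0\cong K_4$, $G_N=G$, $G_i=G[V(G_{i-1})\cup V(F_i)]$ with $F_i$ a $K_4$-link from $G_{i-1}$ chosen by the SWM*-rule. If $F_i$ is a micro $K_4$-link from $G_{i-1}$ and $E(G_i)\setminus(E(G_{i-1})\cup E(F_i))$ consists of exactly one edge, then $F_i$ is called a simple micro $K_4$-link from $G_{i-1}$, and that edge is called the extra edge in $G_i$. *)

theory Defs
  imports "HOL-Analysis.Analysis"
begin

text \<open>A drawing of a graph with vertex set V and edge set E (edges are 2-element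
  vertex sets) in the plane (modelled as the complex plane): pos gives the
  position of each vertex, c gives for each edge a parametrised arc.\<close>

definition crossing_pt ::
  "'v set \<Rightarrow> ('v \<Rightarrow> complex) \<Rightarrow> ('v set \<Rightarrow> real \<Rightarrow> complex) \<Rightarrow> 'v set \<Rightarrow> 'v set \<Rightarrow> complex \<Rightarrow> bool" where
  "crossing_pt V pos c e f p \<longleftrightarrow> e \<noteq> f \<and> p \<in> path_image (c e) \<and> p \<in> path_image (c f) \<and> p \<notin> pos ` V"

definition transversal :: "complex set \<Rightarrow> complex set \<Rightarrow> complex \<Rightarrow> bool" where
  "transversal A B p \<longleftrightarrow>
     (\<exists>U h g. open U \<and> p \<in> U \<and> homeomorphism U (ball 0 1) h g \<and>
        h ` (A \<inter> U) = {z \<in> ball 0 1. Im z = 0} \<and>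
        h ` (B \<inter> U) = {z \<in> ball 0 1. Re z = 0})"

definition one_plane ::
  "'v set \<Rightarrow> 'v set set \<Rightarrow> ('v \<Rightarrow> complex) \<Rightarrow> ('v set \<Rightarrow> real \<Rightarrow> complex) \<Rightarrow> bool" where
  "one_plane V E pos c \<longleftrightarrow>
     finite V \<and> inj_on pos V \<and>
     (\<forall>e\<in>E. \<exists>a b. a \<in> V \<and> b \<in> V \<and> a \<noteq> b \<and> e = {a, b} \<and> arc (c e) \<and>
         {pathstart (c e), pathfinish (c e)} = {pos a, pos b} \<and>
         path_image (c e) \<inter> pos ` V = {pos a, pos b}) \<and>
     (\<forall>e\<in>E. \<forall>f\<in>E. \<forall>p. crossing_pt V pos c e f p \<longrightarrow>
         e \<inter> f = {} \<and> transversal (path_image (c e)) (path_image (c f)) p) \<and>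
     (\<forall>e\<in>E. \<forall>f\<in>E. \<forall>g\<in>E. \<forall>p q. crossing_pt V pos c e f p \<and> crossing_pt V pos c e g q
         \<longrightarrow> f = g \<and> p = q)"

definition maximal_one_plane ::
  "'v set \<Rightarrow> 'v set set \<Rightarrow> ('v \<Rightarrow> complex) \<Rightarrow> ('v set \<Rightarrow> real \<Rightarrow> complex) \<Rightarrow> bool" where
  "maximal_one_plane V E pos c \<longleftrightarrow> one_plane V E pos c \<and>
     (\<forall>a\<in>V. \<forall>b\<in>V. \<forall>\<gamma>. a \<noteq> b \<and> {a, b} \<notin> E \<longrightarrow>
        \<not> one_plane V (insert {a, b} E) pos (c({a, b} := \<gamma>)))"

definition isK4 :: "'v set \<Rightarrow> 'v set set \<Rightarrow> 'v set \<Rightarrow> bool" where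
  "isK4 V E S \<longleftrightarrow> S \<subseteq> V \<and> card S = 4 \<and> (\<forall>a\<in>S. \<forall>b\<in>S. a \<noteq> b \<longrightarrow> {a, b} \<in> E)"

definition nbhd :: "'v set set \<Rightarrow> 'v \<Rightarrow> 'v set" where
  "nbhd E u = {x. {u, x} \<in> E}"

definition induced_edges :: "'v set set \<Rightarrow> 'v set \<Rightarrow> 'v set set" where
  "induced_edges E A = {e \<in> E. e \<subseteq> A}"

definition drawing_pts ::
  "'v set \<Rightarrow> 'v set set \<Rightarrow> ('v \<Rightarrow> complex) \<Rightarrow> ('v set \<Rightarrow> real \<Rightarrow> complex) \<Rightarrow> complex set" where
  "drawing_pts V E pos c = pos ` V \<union> (\<Union>e\<in>E. path_image (c e))"

definition clean ::
  "'v set \<Rightarrow> 'v set set \<Rightarrow> ('v \<Rightarrow> complex) \<Rightarrow> ('v set \<Rightarrow> real \<Rightarrow> complex) \<Rightarrow> 'v set \<Rightarrow> bool" where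
  "clean V E pos c e \<longleftrightarrow> \<not> (\<exists>f\<in>E. \<exists>p. crossing_pt V pos c e f p)"

text \<open>sigma is an initial piece of the drawn edge e starting at vertex u which contains
  no crossing point (so it lies within the near half-edge at u if e is crossed).\<close>
definition init_seg ::
  "'v set \<Rightarrow> 'v set set \<Rightarrow> ('v \<Rightarrow> complex) \<Rightarrow> ('v set \<Rightarrow> real \<Rightarrow> complex) \<Rightarrow> 'v \<Rightarrow> 'v set \<Rightarrow> (real \<Rightarrow> complex) \<Rightarrow> bool" where
  "init_seg V E pos c u e \<sigma> \<longleftrightarrow> arc \<sigma> \<and> pathstart \<sigma> = pos u \<and> pathfinish \<sigma> \<notin> pos ` V \<and>
     path_image \<sigma> \<subseteq> path_image (c e) \<and>
     (\<forall>f\<in>E. f \<noteq> e \<longrightarrow> path_image \<sigma> \<inter> path_image (c f) \<subseteq> {pos u})"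

text \<open>The edges {u,x} and {u,w} (or their near half-edges at u) are consecutive on the
  boundary of some face: there is an arc gamma through a face joining points of the two
  edge segments at u such that the resulting simple closed curve bounds a region
  (a complementary component) containing no point of the drawing.\<close>
definition consecutive_at ::
  "'v set \<Rightarrow> 'v set set \<Rightarrow> ('v \<Rightarrow> complex) \<Rightarrow> ('v set \<Rightarrow> real \<Rightarrow> complex) \<Rightarrow> 'v \<Rightarrow> 'v \<Rightarrow> 'v \<Rightarrow> bool" where
  "consecutive_at V E pos c u x w \<longleftrightarrow>
     (\<exists>\<sigma>1 \<sigma>2 \<gamma>. init_seg V E pos c u {u, x} \<sigma>1 \<and> init_seg V E pos c u {u, w} \<sigma>2 \<and>
        arc \<gamma> \<and> pathstart \<gamma> = pathfinish \<sigma>1 \<and> pathfinish \<gamma> = pathfinish \<sigma>2 \<and>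
        (path_image \<gamma> - {pathstart \<gamma>, pathfinish \<gamma>}) \<inter> drawing_pts V E pos c = {} \<and>
        simple_path (\<sigma>1 +++ \<gamma> +++ reversepath \<sigma>2) \<and>
        (\<exists>C \<in> components (- path_image (\<sigma>1 +++ \<gamma> +++ reversepath \<sigma>2)).
            C \<inter> drawing_pts V E pos c = {}))"

definition K4_link :: "'v set \<Rightarrow> 'v set set \<Rightarrow> 'v set \<Rightarrow> 'v set \<Rightarrow> bool" where
  "K4_link V E A F \<longleftrightarrow> isK4 V E F \<and> 1 \<le> card (F \<inter> A) \<and> card (F \<inter> A) \<le> 3"

definition strong_link :: "'v set \<Rightarrow> 'v set set \<Rightarrow> 'v set \<Rightarrow> 'v set \<Rightarrow> bool" where
  "strong_link V E A F \<longleftrightarrow> isK4 V E F \<and> card (F \<inter> A) = 3"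

definition weak_link :: "'v set \<Rightarrow> 'v set set \<Rightarrow> 'v set \<Rightarrow> 'v set \<Rightarrow> bool" where
  "weak_link V E A F \<longleftrightarrow> isK4 V E F \<and> card (F \<inter> A) = 2"

definition micro_link :: "'v set \<Rightarrow> 'v set set \<Rightarrow> 'v set \<Rightarrow> 'v set \<Rightarrow> bool" where
  "micro_link V E A F \<longleftrightarrow> isK4 V E F \<and> card (F \<inter> A) = 1"

definition swm_choice ::
  "'v set \<Rightarrow> 'v set set \<Rightarrow> ('v \<Rightarrow> complex) \<Rightarrow> ('v set \<Rightarrow> real \<Rightarrow> complex) \<Rightarrow> 'v set \<Rightarrow> 'v set \<Rightarrow> bool" where
  "swm_choice V E pos c A F \<longleftrightarrow>
     (if \<exists>S. strong_link V E A S then strong_link V E A F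
      else if \<exists>S. weak_link V E A S then weak_link V E A F
      else (\<exists>u x w. u \<in> A \<and> x \<in> nbhd E u - A \<and> w \<in> nbhd E u \<inter> A \<and>
              consecutive_at V E pos c u x w \<and>
              ((clean V E pos c {u, x} \<and> isK4 V E F \<and> {u, x} \<subseteq> F) \<or>
               (\<exists>s t. {s, t} \<in> E \<and> (\<exists>p. crossing_pt V pos c {u, x} {s, t} p) \<and>
                      F = {u, x, s, t}))))"

text \<open>A K4-extension sequence G_0,...,G_N (given by vertex sets A i) determined by the
  SWM*-rule, with links F i.\<close>
definition swm_sequence ::
  "'v set \<Rightarrow> 'v set set \<Rightarrow> ('v \<Rightarrow> complex) \<Rightarrow> ('v set \<Rightarrow> real \<Rightarrow> complex) \<Rightarrow>
   nat \<Rightarrow> (nat \<Rightarrow> 'v set) \<Rightarrow> (nat \<Rightarrow> 'v set) \<Rightarrow> bool" where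
  "swm_sequence V E pos c N A F \<longleftrightarrow>
     isK4 V E (A 0) \<and> A N = V \<and>
     (\<forall>i \<in> {1..N}. K4_link V E (A (i - 1)) (F i) \<and> A i = A (i - 1) \<union> F i \<and>
                   swm_choice V E pos c (A (i - 1)) (F i))"

definition simple_micro_link :: "'v set \<Rightarrow> 'v set set \<Rightarrow> 'v set \<Rightarrow> 'v set \<Rightarrow> bool" where
  "simple_micro_link V E A F \<longleftrightarrow> micro_link V E A F \<and>
     card (induced_edges E (A \<union> F) - (induced_edges E A \<union> induced_edges E F)) = 1"

end

theory Submission
  imports Defs
begin

theorem lemma4p2:
  fixes V :: "'v set" and E :: "'v set set" and pos :: "'v \<Rightarrow> complex"
    and c :: "'v set \<Rightarrow> real \<Rightarrow> complex"
    and N :: nat and A F :: "nat \<Rightarrow> 'v set" and i :: nat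
  assumes "maximal_one_plane V E pos c"
    and "card V \<ge> 4"
    and "\<forall>e\<in>E. \<exists>S. isK4 V E S \<and> e \<subseteq> S"
    and "swm_sequence V E pos c N A F"
    and "i \<in> {1..N}"
    and "simple_micro_link V E (A (i - 1)) (F i)"
  shows "i < N \<and> (strong_link V E (A i) (F (i + 1)) \<or> weak_link V E (A i) (F (i + 1)))"
proof -
  define B where "B = A (i - 1)"
  define G where "G = F i"
  define D where "D = induced_edges E (B \<union> G) - (induced_edges E B \<union> induced_edges E G)"
  have seq: "isK4 V E (A 0)" "A N = V"
    "\<And>j. j \<in> {1..N} \<Longrightarrow> K4_link V E (A (j - 1)) (F j) \<and> A j = A (j - 1) \<union> F j \<and>
                   swm_choice V E pos c (A (j - 1)) (F j)"
    using assms(4) unfolding swm_sequence_def by auto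
  have Ai: "A i = B \<union> G" using seq(3)[OF assms(5)] B_def G_def by auto
  have micro: "card (G \<inter> B) = 1" and cD: "card D = 1"
    using assms(6) unfolding simple_micro_link_def micro_link_def B_def G_def D_def by auto
  obtain e where De: "D = {e}" using cD by (rule card_1_singletonE)
  have eD: "e \<in> D" using De by simp
  have eE: "e \<in> E" and eU: "e \<subseteq> B \<union> G" and eB: "\<not> e \<subseteq> B" and eG: "\<not> e \<subseteq> G"
    using eD unfolding D_def induced_edges_def by auto
  obtain b where b: "b \<in> e" "b \<notin> B" "b \<in> G" using eB eU by auto
  obtain a where a: "a \<in> e" "a \<notin> G" "a \<in> B" using eG eU by auto
  have ab: "a \<noteq> b" using a b by auto
  obtain S where S: "isK4 V E S" "e \<subseteq> S" using assms(3) eE by blast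
  have cS: "card S = 4" and SV: "S \<subseteq> V" and Sedges: "\<And>p q. p \<in> S \<Longrightarrow> q \<in> S \<Longrightarrow> p \<noteq> q \<Longrightarrow> {p, q} \<in> E"
    using S(1) unfolding isK4_def by auto
  have notsub: "\<not> S \<subseteq> B \<union> G"
  proof
    assume sub: "S \<subseteq> B \<union> G"
    have pq: "p = a \<and> q = b" if "p \<in> S" "q \<in> S" "p \<in> B - G" "q \<in> G - B" for p q
    proof -
      have pqE: "{p, q} \<in> E" using Sedges[of p q] that by blast
      have "{p, q} \<in> D" unfolding D_def induced_edges_def
        using that pqE sub by blast
      hence "{p, q} = e" using De by auto
      moreover have "e = {a, b}"
      proof -
        have "{p,q} = e" by fact
        thus ?thesis using a b that by auto
      qed
      ultimately show ?thesis using that a b by (auto simp: doubleton_eq_iff)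
    qed
    have "S \<subseteq> {a, b} \<union> (G \<inter> B)"
    proof
      fix x assume x: "x \<in> S"
      show "x \<in> {a, b} \<union> (G \<inter> B)"
      proof (cases "x \<in> B - G")
        case True
        have bS: "b \<in> S" using b S(2) by auto
        have bGB: "b \<in> G - B" using b by simp
        have "x = a" using pq[OF x bS True bGB] by simp
        then show ?thesis by simp
      next
        case False
        show ?thesis
        proof (cases "x \<in> G - B")
          case True
          have aS: "a \<in> S" using a S(2) by auto
          have aBG: "a \<in> B - G" using a by simp
          have "x = b" using pq[OF aS x aBG True] by simp
          then show ?thesis by simp
        next
          case False
          then show ?thesis using \<open>\<not> x \<in> B - G\<close> x sub by auto
        qed
      qed
    qed
    moreover have "finite (G \<inter> B)" using micro by (metis card.infinite zero_neq_one)
    ultimately have "card S \<le> card ({a, b} \<union> (G \<inter> B))"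
      by (intro card_mono) simp_all
    also have "\<dots> \<le> card {a, b} + card (G \<inter> B)" by (rule card_Un_le)
    also have "\<dots> \<le> 3" using micro by (simp add: card_insert_le_m1)
    finally show False using cS by simp
  qed
  have iN: "i < N"
  proof (rule ccontr)
    assume "\<not> i < N"
    hence "i = N" using assms(5) by auto
    thus False using notsub SV seq(2) Ai by auto
  qed
  have finS: "finite S" using cS by (metis card.infinite zero_neq_numeral)
  have two: "2 \<le> card (S \<inter> A i)"
  proof -
    have "{a, b} \<subseteq> S \<inter> A i" using a b S(2) Ai by auto
    hence "card {a, b} \<le> card (S \<inter> A i)" using finS by (intro card_mono) auto
    thus ?thesis using ab by simp
  qed
  have three: "card (S \<inter> A i) \<le> 3"
  proof -
    have "S \<inter> A i \<subset> S" using notsub Ai by auto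
    hence "card (S \<inter> A i) < card S" using finS by (rule psubset_card_mono[rotated])
    thus ?thesis using cS by simp
  qed
  have ex: "(\<exists>T. strong_link V E (A i) T) \<or> (\<exists>T. weak_link V E (A i) T)"
  proof (cases "card (S \<inter> A i) = 3")
    case True
    then show ?thesis using S(1) unfolding strong_link_def by (metis Int_commute)
  next
    case False
    hence "card (S \<inter> A i) = 2" using two three by simp
    then show ?thesis using S(1) unfolding weak_link_def by (metis Int_commute)
  qed
  have "swm_choice V E pos c (A i) (F (i + 1))"
    using seq(3)[of "i+1"] iN by auto
  hence "strong_link V E (A i) (F (i + 1)) \<or> weak_link V E (A i) (F (i + 1))"
  proof (cases "\<exists>T. strong_link V E (A i) T")
    case True
    then show ?thesis using \<open>swm_choice V E pos c (A i) (F (i + 1))\<close> unfolding swm_choice_def by simp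
  next
    case False
    have wS: "\<exists>T. weak_link V E (A i) T" using ex False by blast
    have "weak_link V E (A i) (F (i + 1))"
      using \<open>swm_choice V E pos c (A i) (F (i + 1))\<close> False wS unfolding swm_choice_def
      by (simp only: if_False if_True simp_thms)
    then show ?thesis by simp
  qed
  thus ?thesis using iN by simp
qed

end
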